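(* Let $d\ge 1$, $n\in\mathbb{N}$, and let $S$ be simple symmetric random walk on $\mathbb{Z}^d$ started at $0$, with range $R(n)=\{S(0),\ldots,S(n)\}$. For every finite $A\subset\mathbb{Z}^d$, $$p_n(A):=\Pr[R(n)=A]\le\Big(1-\frac{1}{2d}\Big)^{|\partial A|-1}.$$
   Context: Two vertices $z,w\in\mathbb{Z}^d$ are adjacent, $z\sim w$, if their graph distance in $\mathbb{Z}^d$ is $1$; $z\sim B$ means the graph distance from $z$ to the set $B$ is $1$. The inner boundary of $A\subset\mathbb{Z}^d$ is $\partial A=\{z\in A : z\sim \mathbb{Z}^d\setminus A\}$. *)

theory Defs
  imports "HOL-Analysis.Analysis" "HOL-Probability.Probability"
begin

text \<open>The lattice Z^d is modelled as int ^ 'd for a finite index type 'd, d = CARD('d) \<ge> 1.\<close>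

definition lat_adj :: "int ^ 'd \<Rightarrow> int ^ 'd \<Rightarrow> bool" where
  "lat_adj z w \<longleftrightarrow> (\<Sum>i\<in>UNIV. \<bar>z $ i - w $ i\<bar>) = 1"

definition inner_boundary :: "(int ^ 'd) set \<Rightarrow> (int ^ 'd) set" where
  "inner_boundary A = {z \<in> A. \<exists>w. w \<notin> A \<and> lat_adj z w}"

definition unit_steps :: "(int ^ 'd) set" where
  "unit_steps = {v. \<exists>i. v = axis i 1 \<or> v = axis i (-1)}"

text \<open>Uniform distribution on step sequences of length n: the first n steps of SRW.\<close>
definition srw_steps :: "nat \<Rightarrow> (int ^ 'd) list pmf" where
  "srw_steps n = pmf_of_set {xs. length xs = n \<and> set xs \<subseteq> unit_steps}"

definition walk_pos :: "(int ^ 'd) list \<Rightarrow> nat \<Rightarrow> int ^ 'd" where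
  "walk_pos xs k = sum_list (take k xs)"

definition walk_range :: "(int ^ 'd) list \<Rightarrow> (int ^ 'd) set" where
  "walk_range xs = {walk_pos xs k | k. k \<le> length xs}"

definition range_prob :: "nat \<Rightarrow> (int ^ 'd) set \<Rightarrow> real" where
  "range_prob n A = measure_pmf.prob (srw_steps n) {xs. walk_range xs = A}"

end

theory Submission
  imports Defs
begin

definition LL :: "'a set \<Rightarrow> nat \<Rightarrow> 'a list set" where
  "LL S n = {xs. set xs \<subseteq> S \<and> length xs = n}"

fun W :: "real \<Rightarrow> ('a list \<Rightarrow> bool) \<Rightarrow> ('a list \<Rightarrow> 'a) \<Rightarrow> 'a list \<Rightarrow> real" where
  "W r c f [] = 1"
| "W r c f (x#xs) = (if c [] then (if x = f [] then 0 else r) else 1) * W r (\<lambda>p. c (x#p)) (\<lambda>p. f (x#p)) xs"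

lemma W_nonneg: "r \<ge> 0 \<Longrightarrow> W r c f xs \<ge> 0"
  by (induction xs arbitrary: c f) auto

lemma W_prod: "W r c f xs = (\<Prod>t<length xs. if c (take t xs) then (if xs!t = f (take t xs) then 0 else r) else 1)"
proof (induction xs arbitrary: c f)
  case Nil then show ?case by simp
next
  case (Cons x xs)
  have "(\<Prod>t<length (x#xs). if c (take t (x#xs)) then (if (x#xs)!t = f (take t (x#xs)) then 0 else r) else 1)
     = (if c [] then (if x = f [] then 0 else r) else 1) *
       (\<Prod>t<length xs. if c (take (Suc t) (x#xs)) then (if (x#xs)!(Suc t) = f (take (Suc t) (x#xs)) then 0 else r) else 1)"
    by (simp only: length_Cons prod.lessThan_Suc_shift) simp
  also have "(\<Prod>t<length xs. if c (take (Suc t) (x#xs)) then (if (x#xs)!(Suc t) = f (take (Suc t) (x#xs)) then 0 else r) else 1)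
     = (\<Prod>t<length xs. if c (x # take t xs) then (if xs!t = f (x # take t xs) then 0 else r) else 1)"
    by (rule prod.cong) auto
  finally show ?case by (simp add: Cons)
qed

lemma W_sum:
  assumes fin: "finite S" and r: "r \<ge> 0" "(real (card S) - 1) * r \<le> real (card S)"
    and cf: "\<And>p. c p \<Longrightarrow> f p \<in> S"
  shows "(\<Sum>xs\<in>LL S n. W r c f xs) \<le> real (card S) ^ n"
  using cf
proof (induction n arbitrary: c f)
  case 0
  have "LL S 0 = {[]}" by (auto simp: LL_def)
  then show ?case by simp
next
  case (Suc n)
  define g where "g x = (if c [] then (if x = f [] then 0 else r) else 1)" for x
  have g0: "g x \<ge> 0" for x using r by (simp add: g_def)
  have gs: "(\<Sum>x\<in>S. g x) \<le> real (card S)"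
  proof (cases "c []")
    case True
    then have fS: "f [] \<in> S" using Suc.prems by blast
    have "(\<Sum>x\<in>S. g x) = g (f []) + (\<Sum>x\<in>S - {f []}. g x)"
      using fin fS by (rule sum.remove)
    also have "\<dots> = (\<Sum>x\<in>S - {f []}. r)"
    proof -
      have "g (f []) = 0" using True by (simp add: g_def)
      moreover have "sum g (S - {f []}) = (\<Sum>x\<in>S - {f []}. r)"
        by (rule sum.cong) (auto simp: g_def True)
      ultimately show ?thesis by simp
    qed
    also have "\<dots> = real (card (S - {f []})) * r" by simp
    finally have e: "(\<Sum>x\<in>S. g x) = real (card (S - {f []})) * r" .
    have c1: "card (S - {f []}) = card S - 1" using fin fS by (simp add: card_Diff_singleton)
    have "card S > 0" using fin fS card_gt_0_iff by blast
    then have "real (card S - 1) = real (card S) - 1" by (simp add: of_nat_diff)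
    then show ?thesis using r e c1 by simp
  next
    case False then show ?thesis by (simp add: g_def)
  qed
  have inj: "inj_on (\<lambda>(x, ys). x # ys) (S \<times> LL S n)" by (auto simp: inj_on_def)
  have img: "LL S (Suc n) = (\<lambda>(x, ys). x # ys) ` (S \<times> LL S n)"
    by (auto simp: LL_def length_Suc_conv)
  have "(\<Sum>xs\<in>LL S (Suc n). W r c f xs) = (\<Sum>(x,ys)\<in>S \<times> LL S n. W r c f (x#ys))"
    unfolding img sum.reindex[OF inj] by (simp add: case_prod_unfold)
  also have "\<dots> = (\<Sum>x\<in>S. \<Sum>ys\<in>LL S n. W r c f (x#ys))"
    by (rule sum.cartesian_product[symmetric])
  also have "\<dots> = (\<Sum>x\<in>S. g x * (\<Sum>ys\<in>LL S n. W r (\<lambda>p. c (x#p)) (\<lambda>p. f (x#p)) ys))"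
    by (simp add: sum_distrib_left g_def)
  also have "\<dots> \<le> (\<Sum>x\<in>S. g x * real (card S) ^ n)"
  proof (rule sum_mono, rule mult_left_mono)
    fix x assume "x \<in> S"
    show "(\<Sum>ys\<in>LL S n. W r (\<lambda>p. c (x#p)) (\<lambda>p. f (x#p)) ys) \<le> real (card S) ^ n"
      by (rule Suc.IH) (use Suc.prems in blast)
  qed (rule g0)
  also have "\<dots> = (\<Sum>x\<in>S. g x) * real (card S) ^ n" by (simp add: sum_distrib_right)
  also have "\<dots> \<le> real (card S) * real (card S) ^ n" by (rule mult_right_mono[OF gs]) simp
  finally show ?case by simp
qed

lemma adj_step:
  fixes z w :: "int ^ 'd"
  assumes "lat_adj z w"
  shows "w - z \<in> unit_steps"
proof -
  have s: "(\<Sum>i\<in>UNIV. \<bar>z $ i - w $ i\<bar>) = 1" using assms by (simp add: lat_adj_def)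
  obtain i where i: "z $ i \<noteq> w $ i"
  proof (rule ccontr)
    assume "\<not> thesis"
    then have "\<forall>i. z $ i = w $ i" using that by blast
    then show False using s by simp
  qed
  have "(\<Sum>j\<in>UNIV. \<bar>z $ j - w $ j\<bar>) = \<bar>z $ i - w $ i\<bar> + (\<Sum>j\<in>UNIV - {i}. \<bar>z $ j - w $ j\<bar>)"
    by (rule sum.remove) auto
  moreover have "(\<Sum>j\<in>UNIV - {i}. \<bar>z $ j - w $ j\<bar>) \<ge> 0" by (rule sum_nonneg) auto
  moreover have "\<bar>z $ i - w $ i\<bar> \<ge> 1" using i by linarith
  ultimately have a1: "\<bar>z $ i - w $ i\<bar> = 1" and r0: "(\<Sum>j\<in>UNIV - {i}. \<bar>z $ j - w $ j\<bar>) = 0"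
    using s by linarith+
  have oth: "z $ j = w $ j" if "j \<noteq> i" for j
  proof -
    have "\<forall>j\<in>UNIV - {i}. \<bar>z $ j - w $ j\<bar> = 0"
      using r0 by (subst sum_nonneg_eq_0_iff[symmetric]) auto
    then show ?thesis using that by auto
  qed
  have eq: "w - z = axis i (w $ i - z $ i)"
    by (simp add: vec_eq_iff axis_def oth)
  from a1 have "w $ i - z $ i = 1 \<or> w $ i - z $ i = -1" by linarith
  then show ?thesis using eq unfolding unit_steps_def by auto
qed

lemma unit_steps_card:
  "finite (unit_steps :: (int ^ 'd) set) \<and> card (unit_steps :: (int ^ 'd) set) = 2 * CARD('d)"
proof -
  have e: "(unit_steps :: (int ^ 'd) set) = range (\<lambda>i. axis i 1) \<union> range (\<lambda>i. axis i (-1))"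
    unfolding unit_steps_def by auto
  have i1: "inj (\<lambda>i::'d. axis i (1::int))" by (auto simp: inj_on_def axis_eq_axis)
  have i2: "inj (\<lambda>i::'d. axis i (-1::int))" by (auto simp: inj_on_def axis_eq_axis)
  have d: "range (\<lambda>i::'d. axis i (1::int)) \<inter> range (\<lambda>i. axis i (-1)) = {}"
    by (auto simp: axis_eq_axis)
  have "card (unit_steps :: (int ^ 'd) set) = card (range (\<lambda>i::'d. axis i (1::int))) + card (range (\<lambda>i::'d. axis i (-1::int)))"
    unfolding e by (rule card_Un_disjoint) (use d in auto)
  also have "\<dots> = 2 * CARD('d)" using i1 i2 by (simp add: card_image)
  moreover have "finite (unit_steps :: (int ^ 'd) set)" unfolding e by simp
  ultimately show ?thesis by simp
qed

theorem mainTheorem2: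
  fixes A :: "(int ^ 'd) set" and n :: nat
  assumes "finite A"
  shows "range_prob n A \<le> (1 - 1 / (2 * real CARD('d))) powi (int (card (inner_boundary A)) - 1)"
proof -
  define S where "S = (unit_steps :: (int ^ 'd) set)"
  have finS: "finite S" and cardS: "card S = 2 * CARD('d)" using unit_steps_card S_def by auto
  define m where "m = real (card S)"
  have m2: "m \<ge> 2" unfolding m_def cardS by simp
  define q where "q = 1 - 1 / (2 * real CARD('d))"
  define r where "r = m / (m - 1)"
  have qr: "q = 1 / r" unfolding q_def r_def m_def cardS using m2 m_def cardS by (simp add: field_simps)
  have r1: "r \<ge> 1" unfolding r_def using m2 by (simp add: field_simps)
  have rc: "(real (card S) - 1) * r \<le> real (card S)" unfolding r_def m_def using m2 m_def by (simp add: field_simps)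
  have Sne: "S \<noteq> {}" using cardS by auto
  have LLfin: "finite (LL S n)" unfolding LL_def using finite_lists_length_eq[OF finS] .
  have LLcard: "card (LL S n) = card S ^ n" unfolding LL_def using card_lists_length_eq[OF finS] .
  have LLne: "LL S n \<noteq> {}"
  proof -
    obtain s where "s \<in> S" using Sne by blast
    then have "replicate n s \<in> LL S n" by (auto simp: LL_def)
    then show ?thesis by blast
  qed
  have srw: "srw_steps n = pmf_of_set (LL S n)"
    unfolding srw_steps_def LL_def S_def by (simp add: conj_commute)
  define B where "B = {xs \<in> LL S n. walk_range xs = A}"
  have prob: "range_prob n A = real (card B) / m ^ n"
    unfolding range_prob_def srw measure_pmf_of_set[OF LLne LLfin] B_def m_def LLcard
    by (simp add: Int_def conj_commute)
  define c where "c p = (sum_list p \<in> inner_boundary A \<and> (\<forall>k<length p. sum_list (take k p) \<noteq> sum_list p))" for p :: "(int ^ 'd) list"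
  define f where "f p = (SOME v. v \<in> S \<and> sum_list p + v \<notin> A)" for p :: "(int ^ 'd) list"
  have fprop: "f p \<in> S \<and> sum_list p + f p \<notin> A" if "c p" for p
  proof -
    from that obtain w where w: "w \<notin> A" "lat_adj (sum_list p) w"
      unfolding c_def inner_boundary_def by blast
    have "w - sum_list p \<in> S \<and> sum_list p + (w - sum_list p) \<notin> A"
      using adj_step[OF w(2)] w(1) S_def by simp
    then have "\<exists>v. v \<in> S \<and> sum_list p + v \<notin> A" by blast
    then show ?thesis unfolding f_def by (rule someI_ex)
  qed
  have Wsum: "(\<Sum>xs\<in>LL S n. W r c f xs) \<le> m ^ n"
    unfolding m_def using W_sum[OF finS _ rc, of c f n] r1 fprop by auto
  show ?thesis
  proof (cases "card (inner_boundary A) = 0")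
    case True
    have "range_prob n A \<le> 1" unfolding range_prob_def by simp
    also have "1 \<le> q powi (-1)"
      using qr r1 by (simp add: power_int_minus)
    finally show ?thesis using True q_def by simp
  next
    case False
    define K where "K = card (inner_boundary A) - 1"
    have pK: "q powi (int (card (inner_boundary A)) - 1) = q ^ K"
    proof -
      have "int (card (inner_boundary A)) - 1 = int K" using False unfolding K_def by simp
      then show ?thesis by simp
    qed
    have WB: "W r c f xs \<ge> r ^ K" if xB: "xs \<in> B" for xs
    proof -
      have len: "length xs = n" and rng: "walk_range xs = A" using xB by (auto simp: B_def LL_def)
      define T where "T = {t. t < n \<and> c (take t xs)}"
      have fac: "(if c (take t xs) then (if xs!t = f (take t xs) then 0 else r) else 1) = (if t \<in> T then r else 1)"
        if "t < n" for t
      proof (cases "c (take t xs)")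
        case True
        have "sum_list (take (Suc t) xs) \<in> A"
          using rng \<open>t < n\<close> unfolding walk_range_def walk_pos_def len by auto
        moreover have "sum_list (take (Suc t) xs) = sum_list (take t xs) + xs ! t"
          using \<open>t < n\<close> len by (simp add: take_Suc_conv_app_nth)
        ultimately have "xs ! t \<noteq> f (take t xs)" using fprop[OF True] by auto
        then show ?thesis using True that T_def by simp
      next
        case False then show ?thesis using T_def by simp
      qed
      have "W r c f xs = (\<Prod>t<n. if t \<in> T then r else 1)"
        unfolding W_prod len by (rule prod.cong) (simp_all add: fac)
      also have "\<dots> = r ^ card T"
      proof -
        have "T \<subseteq> {..<n}" unfolding T_def by auto
        then have "{..<n} \<inter> {t. t \<in> T} = T" by auto
        then show ?thesis by (simp add: prod.If_cases)
      qed
      finally have Wr: "W r c f xs = r ^ card T" .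
      have sub: "inner_boundary A \<subseteq> (\<lambda>t. sum_list (take t xs)) ` (insert n T)"
      proof
        fix z assume zb: "z \<in> inner_boundary A"
        then have "z \<in> walk_range xs" using rng unfolding inner_boundary_def by auto
        then obtain k where k: "k \<le> n" "sum_list (take k xs) = z"
          unfolding walk_range_def walk_pos_def len by auto
        define k0 where "k0 = (LEAST k. sum_list (take k xs) = z)"
        have k0: "sum_list (take k0 xs) = z" unfolding k0_def by (rule LeastI[of _ k]) (rule k(2))
        have k0le: "k0 \<le> k" unfolding k0_def by (rule Least_le) (rule k(2))
        have nl: "sum_list (take j xs) \<noteq> z" if "j < k0" for j
          using not_less_Least[OF that[unfolded k0_def]] by blast
        have ck: "c (take k0 xs)"
          unfolding c_def using k0 zb k0le k len nl by (auto simp: min_def)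
        have "k0 \<in> insert n T" using ck k0le k unfolding T_def by auto
        then show "z \<in> (\<lambda>t. sum_list (take t xs)) ` (insert n T)" using k0 by blast
      qed
      have finT: "finite T" unfolding T_def by auto
      have "card (inner_boundary A) \<le> card (insert n T)"
        using card_mono[OF _ sub] card_image_le[of "insert n T" "\<lambda>t. sum_list (take t xs)"] finT
        by (meson finite.insertI finite_imageI le_trans)
      also have "\<dots> \<le> card T + 1" using finT by (simp add: card_insert_if)
      finally have "K \<le> card T" unfolding K_def by simp
      then have "r ^ K \<le> r ^ card T" using r1 by (rule power_increasing)
      then show ?thesis using Wr by simp
    qed
    have BL: "B \<subseteq> LL S n" unfolding B_def by auto
    have "real (card B) * r ^ K = (\<Sum>xs\<in>B. r ^ K)" by simp
    also have "\<dots> \<le> (\<Sum>xs\<in>B. W r c f xs)" by (rule sum_mono) (rule WB)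
    also have "\<dots> \<le> (\<Sum>xs\<in>LL S n. W r c f xs)"
      by (rule sum_mono2[OF LLfin BL]) (rule W_nonneg, use r1 in simp)
    also have "\<dots> \<le> m ^ n" by (rule Wsum)
    finally have cb: "real (card B) * r ^ K \<le> m ^ n" .
    have mpos: "m ^ n > 0" using m2 by simp
    have rpos: "r ^ K > 0" using r1 by simp
    have "real (card B) / m ^ n \<le> 1 / r ^ K"
      using cb mpos rpos by (simp add: field_simps)
    also have "\<dots> = q ^ K" using qr by (simp add: power_one_over)
    finally show ?thesis using prob pK q_def by simp
  qed
qed

end
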